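(* Let $\mathcal{H}$ be a real Hilbert space, $A:\mathcal{H}\rightrightarrows\mathcal{H}$ maximal monotone with $A^{-1}(0)\neq\emptyset$, $\theta>0$, $p\geq1$ an integer, and suppose $(x,\lambda):[0,t_0]\to\mathcal{H}\times(0,+\infty)$ is a solution of \[ \dot{x}(t)+x(t)-(I+\lambda(t)A)^{-1}x(t)=0,\qquad \lambda(t)\,\|(I+\lambda(t)A)^{-1}x(t)-x(t)\|^{p-1}=\theta, \] with $x(0)\in\{x:0\notin Ax\}$, $x$ continuously differentiable and $\lambda$ locally Lipschitz. Then $|\dot\lambda(t)|\leq(p-1)\lambda(t)$ for almost all $t\in[0,t_0]$.
   Context: $(I+\lambda A)^{-1}$ is the resolvent of $A$ of index $\lambda>0$. *)

theory Defs
  imports "HOL-Analysis.Analysis"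
begin

definition monotone_op :: "('a::real_inner \<Rightarrow> 'a set) \<Rightarrow> bool" where
  "monotone_op A \<longleftrightarrow> (\<forall>x y u v. u \<in> A x \<longrightarrow> v \<in> A y \<longrightarrow> 0 \<le> (u - v) \<bullet> (x - y))"

definition maximal_monotone :: "('a::real_inner \<Rightarrow> 'a set) \<Rightarrow> bool" where
  "maximal_monotone A \<longleftrightarrow> monotone_op A \<and>
     (\<forall>B. monotone_op B \<and> (\<forall>x. A x \<subseteq> B x) \<longrightarrow> B = A)"

text \<open>Resolvent (I + lam A)^{-1} x: the unique y with x \<in> y + lam A y.\<close>
definition resolvent :: "real \<Rightarrow> ('a::real_inner \<Rightarrow> 'a set) \<Rightarrow> 'a \<Rightarrow> 'a" where
  "resolvent lam A x = (THE y. \<exists>u \<in> A y. x = y + lam *\<^sub>R u)"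

definition locally_lipschitz_on :: "real set \<Rightarrow> (real \<Rightarrow> real) \<Rightarrow> bool" where
  "locally_lipschitz_on S f \<longleftrightarrow>
     (\<forall>t\<in>S. \<exists>e>0. \<exists>L. L-lipschitz_on (cball t e \<inter> S) f)"

end

theory Submission
  imports Defs
begin


definition Sa :: "'a::real_inner \<Rightarrow> ('a\<times>'a) set \<Rightarrow> ('a\<times>'a \<Rightarrow> real) \<Rightarrow> real" where
  "Sa x S w = (\<Sum>q\<in>S. w q * inner (x - snd q) (fst q))"
definition Ya :: "'a::real_inner \<Rightarrow> ('a\<times>'a) set \<Rightarrow> ('a\<times>'a \<Rightarrow> real) \<Rightarrow> 'a" where
  "Ya x S w = (\<Sum>q\<in>S. w q *\<^sub>R ((1/2) *\<^sub>R ((x - snd q) + fst q)))"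
definition hh :: "'a::real_inner \<Rightarrow> ('a\<times>'a) set \<Rightarrow> ('a\<times>'a \<Rightarrow> real) \<Rightarrow> real" where
  "hh x S w = Sa x S w - (norm (Ya x S w))^2"
definition okw :: "('a\<times>'a) set \<Rightarrow> ('a\<times>'a) set \<Rightarrow> ('a\<times>'a \<Rightarrow> real) \<Rightarrow> bool" where
  "okw G S w \<longleftrightarrow> finite S \<and> S \<subseteq> G \<and> (\<forall>q. q \<notin> S \<longrightarrow> w q = 0) \<and> (\<forall>q. 0 \<le> w q) \<and> sum w S = 1"
definition mono_graph :: "('a::real_inner\<times>'a) set \<Rightarrow> bool" where
  "mono_graph G \<longleftrightarrow> (\<forall>z v z' v'. (z,v)\<in>G \<longrightarrow> (z',v')\<in>G \<longrightarrow> 0 \<le> inner (v - v') (z - z'))"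

lemma Sa_extend:
  assumes "finite T" "S \<subseteq> T" "\<forall>q. q \<notin> S \<longrightarrow> w q = 0"
  shows "Sa x T w = Sa x S w" "Ya x T w = Ya x S w"
  unfolding Sa_def Ya_def using assms
  by (auto intro!: sum.mono_neutral_right)

lemma Sa_lin:
  shows "Sa x T (\<lambda>q. a * w q + b * w' q) = a * Sa x T w + b * Sa x T w'"
    "Ya x T (\<lambda>q. a * w q + b * w' q) = a *\<^sub>R Ya x T w + b *\<^sub>R Ya x T w'"
  unfolding Sa_def Ya_def sum_distrib_left scaleR_sum_right sum.distrib[symmetric]
  by (rule sum.cong; simp add: algebra_simps)+

lemma norm_mix:
  fixes Y1 Y2 :: "'a::real_inner"
  shows "(norm ((1-t) *\<^sub>R Y1 + t *\<^sub>R Y2))^2 = (1-t)*(norm Y1)^2 + t*(norm Y2)^2 - t*(1-t)*(norm (Y1 - Y2))^2"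
  by (simp add: power2_norm_eq_inner inner_add_left inner_add_right inner_diff_left inner_diff_right
      inner_commute algebra_simps)

lemma okw_mix:
  assumes "okw G S w" "okw G S' w'" "0 \<le> t" "t \<le> 1"
  shows "okw G (S \<union> S') (\<lambda>q. (1-t) * w q + t * w' q)"
    and "hh x (S \<union> S') (\<lambda>q. (1-t) * w q + t * w' q) =
       (1-t) * hh x S w + t * hh x S' w' + t*(1-t)*(norm (Ya x S w - Ya x S' w'))^2"
proof -
  have f: "finite (S \<union> S')" using assms(1,2) by (auto simp: okw_def)
  have s1: "sum w (S \<union> S') = 1"
    using assms(1) f by (subst sum.mono_neutral_right[of "S \<union> S'" S]) (auto simp: okw_def)
  have s2: "sum w' (S \<union> S') = 1"
    using assms(2) f by (subst sum.mono_neutral_right[of "S \<union> S'" S']) (auto simp: okw_def)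
  show "okw G (S \<union> S') (\<lambda>q. (1-t) * w q + t * w' q)"
    using assms f s1 s2 unfolding okw_def
    by (auto simp: sum.distrib sum_distrib_left[symmetric])
  have e1: "Sa x (S \<union> S') w = Sa x S w" "Ya x (S \<union> S') w = Ya x S w"
    using assms(1) f by (intro Sa_extend; auto simp: okw_def)+
  have e2: "Sa x (S \<union> S') w' = Sa x S' w'" "Ya x (S \<union> S') w' = Ya x S' w'"
    using assms(2) f by (intro Sa_extend; auto simp: okw_def)+
  show "hh x (S \<union> S') (\<lambda>q. (1-t) * w q + t * w' q) =
       (1-t) * hh x S w + t * hh x S' w' + t*(1-t)*(norm (Ya x S w - Ya x S' w'))^2"
    unfolding hh_def Sa_lin e1 e2 norm_mix by (simp add: algebra_simps)
qed

lemma okw_point: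
  assumes "q \<in> G"
  shows "okw G {q} (\<lambda>r. if r = q then 1 else 0)"
    "Sa x {q} (\<lambda>r. if r = q then 1 else 0) = inner (x - snd q) (fst q)"
    "Ya x {q} (\<lambda>r. if r = q then 1 else 0) = (1/2) *\<^sub>R ((x - snd q) + fst q)"
  using assms by (auto simp: okw_def Sa_def Ya_def)

lemma hh_le0:
  assumes "mono_graph G" "okw G S w"
  shows "hh x S w \<le> 0"
proof -
  define a where "a q = x - snd q" for q :: "'a \<times> 'a"
  define z where "z q = fst q" for q :: "'a \<times> 'a"
  define ab where "ab = (\<Sum>q\<in>S. w q *\<^sub>R a q)"
  define zb where "zb = (\<Sum>q\<in>S. w q *\<^sub>R z q)"
  have fin: "finite S" and sw: "sum w S = 1" and wpos: "\<And>q. 0 \<le> w q" and SG: "S \<subseteq> G"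
    using assms(2) by (auto simp: okw_def)
  have Y: "Ya x S w = (1/2) *\<^sub>R (ab + zb)"
    unfolding Ya_def ab_def zb_def a_def z_def scaleR_sum_right sum.distrib[symmetric]
    by (rule sum.cong; simp add: algebra_simps)
  have Sx: "Sa x S w = (\<Sum>q\<in>S. w q * inner (a q) (z q))"
    unfolding Sa_def a_def z_def by simp
  have D: "(\<Sum>q\<in>S. \<Sum>r\<in>S. w q * w r * inner (a q - a r) (z q - z r)) \<le> 0"
  proof (intro sum_nonpos)
    fix q r assume q: "q \<in> S" and r: "r \<in> S"
    have "0 \<le> inner (snd q - snd r) (fst q - fst r)"
      using assms(1) SG q r unfolding mono_graph_def
      by (metis prod.collapse subsetD)
    then have "inner (a q - a r) (z q - z r) \<le> 0"
      unfolding a_def z_def by (simp add: inner_diff_left inner_diff_right algebra_simps)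
    then show "w q * w r * inner (a q - a r) (z q - z r) \<le> 0"
      using wpos by (simp add: mult_nonneg_nonpos)
  qed
  have I1: "(\<Sum>q\<in>S. \<Sum>r\<in>S. w q * w r * inner (a q) (z q)) = Sa x S w"
    unfolding Sx by (simp add: sum_distrib_left[symmetric] sum_distrib_right[symmetric] sw mult.commute mult.left_commute)
  have I4: "(\<Sum>q\<in>S. \<Sum>r\<in>S. w q * w r * inner (a r) (z r)) = Sa x S w"
    unfolding Sx by (subst sum.swap) (simp add: sum_distrib_left[symmetric] sum_distrib_right[symmetric] sw mult.commute mult.left_commute)
  have I2: "(\<Sum>q\<in>S. \<Sum>r\<in>S. w q * w r * inner (a r) (z q)) = inner ab zb"
    unfolding ab_def zb_def by (simp add: inner_sum_left inner_sum_right sum_distrib_left mult.assoc)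
  have I3: "(\<Sum>q\<in>S. \<Sum>r\<in>S. w q * w r * inner (a q) (z r)) = inner ab zb"
  proof -
    have "(\<Sum>q\<in>S. \<Sum>r\<in>S. w q * w r * inner (a q) (z r)) = (\<Sum>r\<in>S. \<Sum>q\<in>S. w q * w r * inner (a q) (z r))"
      by (rule sum.swap)
    also have "\<dots> = (\<Sum>q\<in>S. \<Sum>r\<in>S. w q * w r * inner (a r) (z q))"
      by (simp add: mult.commute)
    finally show ?thesis using I2 by simp
  qed
  have "(\<Sum>q\<in>S. \<Sum>r\<in>S. w q * w r * inner (a q - a r) (z q - z r)) =
        (\<Sum>q\<in>S. \<Sum>r\<in>S. w q * w r * inner (a q) (z q)) - (\<Sum>q\<in>S. \<Sum>r\<in>S. w q * w r * inner (a q) (z r))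
      - (\<Sum>q\<in>S. \<Sum>r\<in>S. w q * w r * inner (a r) (z q)) + (\<Sum>q\<in>S. \<Sum>r\<in>S. w q * w r * inner (a r) (z r))"
    by (simp add: inner_diff_left inner_diff_right algebra_simps sum.distrib sum_subtractf)
  then have "Sa x S w \<le> inner ab zb" using D I1 I2 I3 I4 by linarith
  moreover have "inner ab zb \<le> (norm ((1/2) *\<^sub>R (ab + zb)))^2"
  proof -
    have "0 \<le> (norm ((1/2) *\<^sub>R (ab - zb)))^2" by simp
    then show ?thesis
      by (simp add: power2_norm_eq_inner inner_add_left inner_add_right inner_diff_left inner_diff_right
          inner_commute algebra_simps)
  qed
  ultimately show ?thesis unfolding hh_def Y by linarith
qed



lemma gq_ident:
  fixes Y a z :: "'a::real_inner"
  shows "inner (Y - a) (Y - z) = (norm (Y - (1/2) *\<^sub>R (a + z)))^2 + (inner a z - (norm ((1/2) *\<^sub>R (a + z)))^2)"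
  by (simp add: power2_norm_eq_inner inner_add_left inner_add_right inner_diff_left inner_diff_right
      inner_commute algebra_simps)

lemma minty_graph:
  fixes G :: "('a::{real_inner,complete_space} \<times> 'a) set"
  assumes mono: "mono_graph G" and ne: "G \<noteq> {}"
  shows "\<exists>y. \<forall>z v. (z,v)\<in>G \<longrightarrow> 0 \<le> inner ((x - y) - v) (y - z)"
proof -
  define P where "P = {(S,w). okw G S w}"
  define hv where "hv = (\<lambda>(S,w). hh x S w)"
  define H where "H = Sup (hv ` P)"
  obtain q0 where q0: "q0 \<in> G" using ne by auto
  have Pne: "hv ` P \<noteq> {}" using okw_point(1)[OF q0] unfolding P_def by auto
  have bdd: "bdd_above (hv ` P)" unfolding bdd_above_def P_def hv_def using hh_le0[OF mono] by auto
  have hv_le: "\<And>al. al \<in> P \<Longrightarrow> hv al \<le> H" unfolding H_def using bdd by (intro cSup_upper) auto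
  have H0: "H \<le> 0" unfolding H_def using Pne hh_le0[OF mono] by (intro cSup_least) (auto simp: P_def hv_def)
  have "\<forall>n::nat. \<exists>al\<in>P. H - 1/(Suc n) < hv al"
  proof
    fix n :: nat
    have "H - 1/Suc n < H" by simp
    then show "\<exists>al\<in>P. H - 1/(Suc n) < hv al" using less_cSupD[OF Pne, of "H - 1/Suc n"] unfolding H_def by auto
  qed
  then obtain al where al: "\<And>n. al n \<in> P" "\<And>n. H - 1/(Suc n) < hv (al n)" by metis
  define Y where "Y n = Ya x (fst (al n)) (snd (al n))" for n
  define hn where "hn n = hv (al n)" for n
  have alok: "okw G (fst (al n)) (snd (al n))" for n using al(1)[of n] by (auto simp: P_def)
  have hn_eq: "hn n = hh x (fst (al n)) (snd (al n))" for n unfolding hn_def hv_def by (simp add: case_prod_beta)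
  have hn_le: "hn n \<le> H" for n unfolding hn_def using hv_le al(1) by auto
  have key: "(norm (Ya x S w - Ya x S' w'))^2 \<le> 4 * (H - (hh x S w + hh x S' w')/2)"
    if a: "okw G S w" "okw G S' w'" for S w S' w'
  proof -
    have "hh x (S \<union> S') (\<lambda>q. (1-1/2) * w q + (1/2) * w' q) \<le> H"
      using hv_le[of "(S \<union> S', \<lambda>q. (1-1/2) * w q + (1/2) * w' q)"] okw_mix(1)[OF a, of "1/2"]
      by (auto simp: P_def hv_def)
    moreover have "hh x (S \<union> S') (\<lambda>q. (1-1/2) * w q + (1/2) * w' q) =
       1/2 * hh x S w + 1/2 * hh x S' w' + 1/4*(norm (Ya x S w - Ya x S' w'))^2"
      using okw_mix(2)[OF a, of "1/2" x] by simp
    moreover have "\<And>A B C D. A \<le> H \<Longrightarrow> A = 1/2*B + 1/2*C + 1/4*D \<Longrightarrow> D \<le> 4*(H - (B+C)/2)"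
      by (simp add: field_simps)
    ultimately show ?thesis by blast
  qed
  have Ycauchy: "Cauchy Y"
  proof (rule metric_CauchyI)
    fix e :: real assume e: "e > 0"
    obtain N :: nat where N: "4 / e^2 < real N" using reals_Archimedean2 by blast
    have NN: "4 / (Suc N) < e^2"
    proof -
      have "4 < e^2 * real N" using N e by (simp add: field_simps)
      also have "\<dots> \<le> e^2 * Suc N" using e by simp
      finally show ?thesis by (simp add: field_simps)
    qed
    show "\<exists>M. \<forall>m\<ge>M. \<forall>n\<ge>M. dist (Y m) (Y n) < e"
    proof (intro exI allI impI)
      fix m n assume mn: "N \<le> m" "N \<le> n"
      have "(norm (Y m - Y n))^2 \<le> 4 * (H - (hn m + hn n)/2)"
        unfolding Y_def hn_eq by (rule key[OF alok alok])
      also have "\<dots> < 4 * ((1/Suc m + 1/Suc n)/2)"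
      proof -
        have gen: "\<And>a b c d. H - c < a \<Longrightarrow> H - d < b \<Longrightarrow> 4*(H - (a+b)/2) < 4*((c+d)/2)"
          by (simp add: field_simps)
        show ?thesis unfolding hn_def by (rule gen[OF al(2)[of m] al(2)[of n]])
      qed
      also have "\<dots> \<le> 4/(Suc N)"
      proof -
        have "1/real (Suc m) \<le> 1/Suc N" "1/real (Suc n) \<le> 1/Suc N" using mn by (auto simp: field_simps)
        then show ?thesis by simp
      qed
      finally have "(norm (Y m - Y n))^2 < e^2" using NN by simp
      then show "dist (Y m) (Y n) < e" using e by (simp add: dist_norm power2_less_imp_less)
    qed
  qed
  then obtain y where Yy: "Y \<longlonglongrightarrow> y" using Cauchy_convergent_iff convergent_def by blast
  have hnH: "hn \<longlonglongrightarrow> H"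
  proof (rule tendsto_sandwich[of "\<lambda>n. H - 1/Suc n" _ _ "\<lambda>n. H"])
    show "\<forall>\<^sub>F n in sequentially. H - 1 / real (Suc n) \<le> hn n" unfolding hn_def by (intro always_eventually allI less_imp_le al(2))
    show "\<forall>\<^sub>F n in sequentially. hn n \<le> H" using hn_le by auto
    show "(\<lambda>n. H - 1 / real (Suc n)) \<longlonglongrightarrow> H"
      using tendsto_diff[OF tendsto_const LIMSEQ_inverse_real_of_nat, of H] by (simp add: inverse_eq_divide)
    show "(\<lambda>n. H) \<longlonglongrightarrow> H" by simp
  qed
  show ?thesis
  proof (intro exI allI impI)
    fix z v assume zv: "(z,v) \<in> G"
    define a where "a = x - v"
    define wq where "wq = (1/2) *\<^sub>R (a + z)"
    define hb where "hb = inner a z - (norm wq)^2"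
    have ineq: "t * (inner (Y n - a) (Y n - z) - hn n) \<le> (H - hn n) + t^2 * (norm (Y n - wq))^2"
      if t: "0 \<le> t" "t \<le> 1" for t n
    proof -
      note pt = okw_point(1)[OF zv] okw_point(2,3)[OF zv, of x]
      have hbeq: "hh x {(z,v)} (\<lambda>r. if r = (z,v) then 1 else 0) = hb"
        unfolding hh_def hb_def wq_def a_def using pt by simp
      have Yb: "Ya x {(z,v)} (\<lambda>r. if r = (z,v) then 1 else 0) = wq" unfolding wq_def a_def using pt by simp
      have mixok: "okw G (fst (al n) \<union> {(z,v)}) (\<lambda>q. (1-t) * snd (al n) q + t * (if q = (z,v) then 1 else 0))"
        by (rule okw_mix(1)[OF alok pt(1) t])
      have "hh x (fst (al n) \<union> {(z,v)}) (\<lambda>q. (1-t) * snd (al n) q + t * (if q = (z,v) then 1 else 0)) \<le> H"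
        using hv_le[of "(fst (al n) \<union> {(z,v)}, \<lambda>q. (1-t) * snd (al n) q + t * (if q = (z,v) then 1 else 0))"] mixok
        by (auto simp: P_def hv_def)
      then have A: "(1-t) * hn n + t * hb + t*(1-t)*(norm (Y n - wq))^2 \<le> H"
        using okw_mix(2)[OF alok pt(1) t, of x] unfolding hbeq Yb hn_eq Y_def by simp
      have B: "inner (Y n - a) (Y n - z) = (norm (Y n - wq))^2 + hb"
        unfolding hb_def wq_def by (rule gq_ident)
      show ?thesis unfolding B using A by (simp add: algebra_simps power2_eq_square)
    qed
    have lim: "t * (inner (y - a) (y - z) - H) \<le> (H - H) + t^2 * (norm (y - wq))^2"
      if t: "0 \<le> t" "t \<le> 1" for t
    proof (rule LIMSEQ_le)
      show "(\<lambda>n. t * (inner (Y n - a) (Y n - z) - hn n)) \<longlonglongrightarrow> t * (inner (y - a) (y - z) - H)"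
        by (intro tendsto_intros Yy hnH)
      show "(\<lambda>n. (H - hn n) + t^2 * (norm (Y n - wq))^2) \<longlonglongrightarrow> (H - H) + t^2 * (norm (y - wq))^2"
        by (intro tendsto_intros Yy hnH)
      show "\<exists>N. \<forall>n\<ge>N. t * (inner (Y n - a) (Y n - z) - hn n) \<le> (H - hn n) + t^2 * (norm (Y n - wq))^2"
        using ineq[OF t] by blast
    qed
    have g: "inner (y - a) (y - z) \<le> H"
    proof (rule field_le_epsilon)
      fix e :: real assume e: "0 < e"
      define c where "c = (norm (y - wq))^2 + 1"
      have c: "c > 0" unfolding c_def by (simp add: add_nonneg_pos)
      define t where "t = min 1 (e / c)"
      have t: "0 < t" "t \<le> 1" "t * c \<le> e" using e c unfolding t_def
        by (auto simp: min_def field_simps)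
      have "t * (inner (y - a) (y - z) - H) \<le> t^2 * (norm (y - wq))^2"
        using lim[of t] t by simp
      also have "\<dots> \<le> t * (t * c)"
        unfolding c_def using t by (simp add: power2_eq_square algebra_simps)
      finally have "t * (inner (y - a) (y - z) - H) \<le> t * (t * c)" .
      then have "inner (y - a) (y - z) - H \<le> t * c" using t by simp
      then show "inner (y - a) (y - z) \<le> H + e" using t by linarith
    qed
    have "inner ((x - y) - v) (y - z) = - inner (y - a) (y - z)"
      unfolding a_def by (simp add: inner_diff_left algebra_simps)
    then show "0 \<le> inner ((x - y) - v) (y - z)" using g H0 by linarith
  qed
qed



lemma resolvent_unique:
  fixes A :: "'a::real_inner \<Rightarrow> 'a set"
  assumes "monotone_op A" "lam > 0" "u1 \<in> A y1" "x = y1 + lam *\<^sub>R u1" "u2 \<in> A y2" "x = y2 + lam *\<^sub>R u2"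
  shows "y1 = y2"
proof -
  have "0 \<le> inner (u1 - u2) (y1 - y2)" using assms(1,3,5) unfolding monotone_op_def by blast
  moreover have "y1 - y2 = - lam *\<^sub>R (u1 - u2)" using assms(4,6) by (simp add: algebra_simps)
  ultimately have "0 \<le> - lam * inner (u1 - u2) (u1 - u2)" by simp
  then have "inner (u1 - u2) (u1 - u2) \<le> 0" using assms(2) by (simp add: mult_le_0_iff)
  then have "inner (u1 - u2) (u1 - u2) = 0" by (meson antisym inner_ge_zero)
  then have "u1 = u2" by simp
  then show ?thesis using assms(4,6) by simp
qed

lemma resolvent_exists:
  fixes A :: "'a::{real_inner,complete_space} \<Rightarrow> 'a set"
  assumes mm: "maximal_monotone A" and ne: "\<exists>z. A z \<noteq> {}" and lam: "lam > 0"
  shows "\<exists>y. \<exists>u\<in>A y. x = y + lam *\<^sub>R u"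
proof -
  have mA: "monotone_op A" using mm unfolding maximal_monotone_def by simp
  define G where "G = {(z, lam *\<^sub>R u) | z u. u \<in> A z}"
  have mg: "mono_graph G" unfolding mono_graph_def G_def
  proof (clarify)
    fix z z' u u' assume "u \<in> A z" "u' \<in> A z'"
    then have "0 \<le> inner (u - u') (z - z')" using mA unfolding monotone_op_def by blast
    then show "0 \<le> inner (lam *\<^sub>R u - lam *\<^sub>R u') (z - z')"
      using lam by (simp add: scaleR_diff_right[symmetric])
  qed
  have Gne: "G \<noteq> {}" using ne unfolding G_def by auto
  obtain y where y: "\<And>z v. (z,v) \<in> G \<Longrightarrow> 0 \<le> inner ((x - y) - v) (y - z)"
    using minty_graph[OF mg Gne, of x] by blast
  define w where "w = (1/lam) *\<^sub>R (x - y)"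
  have yw: "0 \<le> inner (w - u) (y - z)" if "u \<in> A z" for z u
  proof -
    have "0 \<le> inner ((x - y) - lam *\<^sub>R u) (y - z)" using y[of z "lam *\<^sub>R u"] that unfolding G_def by blast
    moreover have "(x - y) - lam *\<^sub>R u = lam *\<^sub>R (w - u)" unfolding w_def using lam by (simp add: algebra_simps)
    ultimately show ?thesis using lam by (simp add: zero_le_mult_iff)
  qed
  define B where "B = (\<lambda>z. A z \<union> (if z = y then {w} else {}))"
  have mB: "monotone_op B" unfolding monotone_op_def
  proof (intro allI impI)
    fix a b u v assume u: "u \<in> B a" and v: "v \<in> B b"
    show "0 \<le> inner (u - v) (a - b)"
    proof (cases "u \<in> A a")
      case True
      show ?thesis
      proof (cases "v \<in> A b")
        case True
        then show ?thesis using \<open>u \<in> A a\<close> mA unfolding monotone_op_def by blast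
      next
        case False
        then have "b = y" "v = w" using v unfolding B_def by (auto split: if_splits)
        moreover have "inner (u - w) (a - y) = inner (w - u) (y - a)"
          by (metis inner_minus_left inner_minus_right minus_diff_eq minus_minus)
        ultimately show ?thesis using yw[OF \<open>u \<in> A a\<close>] by simp
      qed
    next
      case False
      then have ay: "a = y" "u = w" using u unfolding B_def by (auto split: if_splits)
      show ?thesis
      proof (cases "v \<in> A b")
        case True
        then show ?thesis using yw[OF True] ay by simp
      next
        case False
        then have "b = y" "v = w" using v unfolding B_def by (auto split: if_splits)
        then show ?thesis using ay by simp
      qed
    qed
  qed
  have sub: "\<forall>z. A z \<subseteq> B z" unfolding B_def by auto
  have "\<forall>B. monotone_op B \<and> (\<forall>x. A x \<subseteq> B x) \<longrightarrow> B = A" using mm by (simp add: maximal_monotone_def)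
  then have "B = A" using mB sub by blast
  moreover have "w \<in> B y" unfolding B_def by simp
  ultimately have "w \<in> A y" by simp
  moreover have "x = y + lam *\<^sub>R w" unfolding w_def using lam by simp
  ultimately show ?thesis by blast
qed

lemma resolvent_prop:
  fixes A :: "'a::{real_inner,complete_space} \<Rightarrow> 'a set"
  assumes mm: "maximal_monotone A" and ne: "\<exists>z. A z \<noteq> {}" and lam: "lam > 0"
  shows "\<exists>u\<in>A (resolvent lam A x). x = resolvent lam A x + lam *\<^sub>R u"
proof -
  have mA: "monotone_op A" using mm unfolding maximal_monotone_def by simp
  obtain y u where yu: "u \<in> A y" "x = y + lam *\<^sub>R u" using resolvent_exists[OF mm ne lam, of x] by blast
  have "resolvent lam A x = y" unfolding resolvent_def
  proof (rule the_equality)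
    show "\<exists>u\<in>A y. x = y + lam *\<^sub>R u" using yu by blast
    fix y' assume "\<exists>u\<in>A y'. x = y' + lam *\<^sub>R u"
    then obtain u' where "u' \<in> A y'" "x = y' + lam *\<^sub>R u'" by blast
    then show "y' = y" using resolvent_unique[OF mA lam _ _ yu] by blast
  qed
  then show ?thesis using yu by blast
qed



lemma res_F2:
  fixes A :: "'a::{real_inner,complete_space} \<Rightarrow> 'a set"
  assumes mm: "maximal_monotone A" and ne: "\<exists>z. A z \<noteq> {}" and mu: "mu > 0"
  shows "norm ((y2 - resolvent mu A y2) - (y1 - resolvent mu A y1)) \<le> norm (y2 - y1)"
proof -
  have mA: "monotone_op A" using mm unfolding maximal_monotone_def by simp
  define R1 where "R1 = resolvent mu A y1"
  define R2 where "R2 = resolvent mu A y2"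
  obtain u1 where u1: "u1 \<in> A R1" "y1 = R1 + mu *\<^sub>R u1" using resolvent_prop[OF mm ne mu, of y1] unfolding R1_def by blast
  obtain u2 where u2: "u2 \<in> A R2" "y2 = R2 + mu *\<^sub>R u2" using resolvent_prop[OF mm ne mu, of y2] unfolding R2_def by blast
  define d where "d = (y1 - R1) - (y2 - R2)"
  have dd: "d = mu *\<^sub>R (u1 - u2)" unfolding d_def using u1 u2 by (simp add: algebra_simps)
  have "0 \<le> inner (u1 - u2) (R1 - R2)" using mA u1 u2 unfolding monotone_op_def by blast
  then have "0 \<le> inner d (R1 - R2)" unfolding dd using mu by simp
  moreover have "R1 - R2 = (y1 - y2) - d" unfolding d_def by simp
  ultimately have "inner d d \<le> inner d (y1 - y2)" by (simp add: inner_diff_right)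
  also have "\<dots> \<le> norm d * norm (y1 - y2)" by (rule Cauchy_Schwarz_ineq2[THEN order_trans[OF abs_ge_self]])
  finally have "(norm d)^2 \<le> norm d * norm (y1 - y2)" by (simp add: power2_norm_eq_inner)
  then have "norm d \<le> norm (y1 - y2)"
    by (metis (no_types, lifting) mult_le_cancel_left norm_ge_zero not_le power2_eq_square mult_zero_left order.trans mult_right_mono)
  moreover have "norm ((y2 - R2) - (y1 - R1)) = norm d" unfolding d_def by (simp add: norm_minus_commute)
  ultimately show ?thesis unfolding R1_def R2_def by (simp add: norm_minus_commute)
qed

lemma res_F1:
  fixes A :: "'a::{real_inner,complete_space} \<Rightarrow> 'a set"
  assumes mm: "maximal_monotone A" and ne: "\<exists>z. A z \<noteq> {}" and mu1: "mu1 > 0" and le: "mu1 \<le> mu2"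
  shows "norm (y - resolvent mu1 A y) \<le> norm (y - resolvent mu2 A y)"
proof -
  have mA: "monotone_op A" using mm unfolding maximal_monotone_def by simp
  have mu2: "mu2 > 0" using mu1 le by simp
  define R1 where "R1 = resolvent mu1 A y"
  define R2 where "R2 = resolvent mu2 A y"
  obtain u1 where u1: "u1 \<in> A R1" "y = R1 + mu1 *\<^sub>R u1" using resolvent_prop[OF mm ne mu1, of y] unfolding R1_def by blast
  obtain u2 where u2: "u2 \<in> A R2" "y = R2 + mu2 *\<^sub>R u2" using resolvent_prop[OF mm ne mu2, of y] unfolding R2_def by blast
  define v1 where "v1 = y - R1"
  define v2 where "v2 = y - R2"
  have v1: "v1 = mu1 *\<^sub>R u1" and v2: "v2 = mu2 *\<^sub>R u2" unfolding v1_def v2_def using u1 u2 by (simp_all add: algebra_simps)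
  have "0 \<le> inner (u1 - u2) (R1 - R2)" using mA u1 u2 unfolding monotone_op_def by blast
  moreover have "R1 - R2 = v2 - v1" unfolding v1_def v2_def by simp
  moreover have "u1 = (1/mu1) *\<^sub>R v1" "u2 = (1/mu2) *\<^sub>R v2" using v1 v2 mu1 mu2 by auto
  ultimately have "0 \<le> inner ((1/mu1) *\<^sub>R v1 - (1/mu2) *\<^sub>R v2) (v2 - v1)" by simp
  then have h: "inner v1 v1/mu1 + inner v2 v2/mu2 \<le> inner v1 v2/mu1 + inner v1 v2/mu2"
    by (simp add: inner_diff_left inner_diff_right inner_commute algebra_simps)
  have h2: "inner v1 v1 * mu2 + inner v2 v2 * mu1 \<le> inner v1 v2 * mu2 + inner v1 v2 * mu1"
  proof -
    have "(inner v1 v1/mu1 + inner v2 v2/mu2) * (mu1 * mu2) \<le> (inner v1 v2/mu1 + inner v1 v2/mu2) * (mu1*mu2)"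
      using h mu1 mu2 by (intro mult_right_mono) auto
    then show ?thesis using mu1 mu2 by (simp add: algebra_simps)
  qed
  have CS: "inner v1 v2 \<le> norm v1 * norm v2" by (metis Cauchy_Schwarz_ineq2 abs_le_iff)
  have sq: "inner v1 v1 = (norm v1)^2" "inner v2 v2 = (norm v2)^2" by (simp_all add: power2_norm_eq_inner)
  have c2: "(mu1 + mu2) * inner v1 v2 \<le> (mu1 + mu2) * (norm v1 * norm v2)"
    using CS mu1 mu2 by (intro mult_left_mono) auto
  have key: "mu2 * (norm v1)^2 + mu1 * (norm v2)^2 \<le> (mu1 + mu2) * (norm v1 * norm v2)"
    using h2 c2 unfolding sq by (simp add: algebra_simps)
  show ?thesis
  proof (rule ccontr)
    assume "\<not> ?thesis"
    then have gt: "norm v1 > norm v2" unfolding v1_def v2_def R1_def R2_def by simp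
    have "(norm v1 - norm v2) * (mu2 * norm v1 - mu1 * norm v2) \<le> 0"
      using key by (simp add: power2_eq_square algebra_simps)
    moreover have "mu2 * norm v1 - mu1 * norm v2 > 0"
    proof -
      have "mu1 * norm v2 < mu1 * norm v1" using gt mu1 by simp
      also have "\<dots> \<le> mu2 * norm v1" using le by (simp add: mult_right_mono)
      finally show ?thesis by simp
    qed
    ultimately show False using gt by (simp add: mult_le_0_iff)
  qed
qed

lemma phi_lip_aux:
  fixes A :: "'a::{real_inner,complete_space} \<Rightarrow> 'a set"
  assumes mm: "maximal_monotone A" and ne: "\<exists>z. A z \<noteq> {}"
    and l1: "l1 > 0" and le: "l1 \<le> l2" and k: "k \<ge> 1" and th: "\<theta> > 0"
    and e1: "l1 * (norm (resolvent l1 A y1 - y1))^k = \<theta>"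
    and e2: "l2 * (norm (resolvent l2 A y2 - y2))^k = \<theta>"
  shows "\<bar>norm (resolvent l2 A y2 - y2) - norm (resolvent l1 A y1 - y1)\<bar> \<le> norm (y2 - y1)"
proof -
  have l2: "l2 > 0" using l1 le by simp
  define f1 where "f1 = norm (resolvent l1 A y1 - y1)"
  define f2 where "f2 = norm (resolvent l2 A y2 - y2)"
  have "f2^k = \<theta>/l2" "f1^k = \<theta>/l1" using e1 e2 l1 l2 unfolding f1_def f2_def by (simp_all add: field_simps)
  moreover have "\<theta>/l2 \<le> \<theta>/l1" using th l1 le by (simp add: frac_le)
  ultimately have "f2^k \<le> f1^k" by simp
  moreover obtain n where kn: "k = Suc n" using k by (cases k) auto
  ultimately have f21: "f2 \<le> f1" using power_le_imp_le_base[of f2 n f1] unfolding f1_def by simp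
  define ps where "ps = norm (y1 - resolvent l2 A y1)"
  have "f1 \<le> ps" unfolding f1_def ps_def using res_F1[OF mm ne l1 le, of y1] by (simp add: norm_minus_commute)
  moreover have "\<bar>f2 - ps\<bar> \<le> norm (y2 - y1)"
  proof -
    have "\<bar>f2 - ps\<bar> = \<bar>norm (y2 - resolvent l2 A y2) - norm (y1 - resolvent l2 A y1)\<bar>"
      unfolding f2_def ps_def by (simp add: norm_minus_commute)
    also have "\<dots> \<le> norm ((y2 - resolvent l2 A y2) - (y1 - resolvent l2 A y1))" by (rule norm_triangle_ineq3)
    also have "\<dots> \<le> norm (y2 - y1)" by (rule res_F2[OF mm ne l2])
    finally show ?thesis .
  qed
  ultimately show ?thesis using f21 unfolding f1_def[symmetric] f2_def[symmetric] by linarith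
qed

lemma phi_lip:
  fixes A :: "'a::{real_inner,complete_space} \<Rightarrow> 'a set"
  assumes mm: "maximal_monotone A" and ne: "\<exists>z. A z \<noteq> {}"
    and l1: "l1 > 0" and l2: "l2 > 0" and k: "k \<ge> 1" and th: "\<theta> > 0"
    and e1: "l1 * (norm (resolvent l1 A y1 - y1))^k = \<theta>"
    and e2: "l2 * (norm (resolvent l2 A y2 - y2))^k = \<theta>"
  shows "\<bar>norm (resolvent l2 A y2 - y2) - norm (resolvent l1 A y1 - y1)\<bar> \<le> norm (y2 - y1)"
proof (cases "l1 \<le> l2")
  case True
  then show ?thesis using phi_lip_aux[OF mm ne l1 True k th e1 e2] by simp
next
  case False
  then have "l2 \<le> l1" by simp
  from phi_lip_aux[OF mm ne l2 this k th e2 e1] show ?thesis by (simp add: abs_minus_commute norm_minus_commute)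
qed

lemma pow_diff_bound:
  fixes a b :: real
  assumes "0 \<le> a" "0 \<le> b"
  shows "\<bar>b^k - a^k\<bar> \<le> real k * (max a b)^(k-1) * \<bar>b - a\<bar>"
proof (cases "k = 0 \<or> max a b = 0")
  case True
  then show ?thesis using assms by (auto simp: max_def split: if_splits)
next
  case False
  define M where "M = max a b"
  have M: "M > 0" using False assms unfolding M_def by (auto simp: max_def)
  have "norm ((b/M)^k - (a/M)^k) \<le> real k * norm (b/M - a/M)"
    by (rule norm_power_diff) (use M assms in \<open>auto simp: M_def max_def field_simps\<close>)
  then have "\<bar>(b/M)^k - (a/M)^k\<bar> \<le> real k * (\<bar>b - a\<bar>/M)" using M by (simp add: diff_divide_distrib[symmetric])
  then have "M^k * \<bar>(b/M)^k - (a/M)^k\<bar> \<le> M^k * (real k * (\<bar>b - a\<bar>/M))"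
    by (rule mult_left_mono) (use M in simp)
  moreover have "M^k * \<bar>(b/M)^k - (a/M)^k\<bar> = \<bar>b^k - a^k\<bar>"
  proof -
    have "(b/M)^k - (a/M)^k = (b^k - a^k)/M^k" by (simp add: power_divide diff_divide_distrib)
    then show ?thesis using M by (simp add: abs_divide)
  qed
  moreover have "M^k * (real k * (\<bar>b - a\<bar>/M)) = real k * M^(k-1) * \<bar>b - a\<bar>"
    using M False by (cases k) (auto simp: field_simps)
  ultimately show ?thesis unfolding M_def by simp
qed

lemma norm_ratio_tendsto:
  assumes "(x has_vector_derivative v) (at t)"
  shows "((\<lambda>s. norm (x s - x t) / \<bar>s - t\<bar>) \<longlongrightarrow> norm v) (at t)"
proof -
  have "((\<lambda>s. norm ((x s - x t) - (s - t) *\<^sub>R v) / norm (s - t)) \<longlongrightarrow> 0) (at t)"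
    using assms unfolding has_vector_derivative_def has_derivative_iff_norm by simp
  then have z: "((\<lambda>s. norm ((x s - x t) - (s - t) *\<^sub>R v) / \<bar>s - t\<bar>) \<longlongrightarrow> 0) (at t)" by simp
  have "((\<lambda>s. norm (x s - x t) / \<bar>s - t\<bar> - norm v) \<longlongrightarrow> 0) (at t)"
  proof (rule Lim_null_comparison[OF _ z])
    show "\<forall>\<^sub>F s in at t. norm (norm (x s - x t) / \<bar>s - t\<bar> - norm v) \<le> norm ((x s - x t) - (s - t) *\<^sub>R v) / \<bar>s - t\<bar>"
      unfolding eventually_at
    proof (intro exI[of _ 1] conjI ballI impI, simp)
      fix s assume "s \<in> UNIV" "s \<noteq> t \<and> dist s t < 1"
      then have st: "\<bar>s - t\<bar> > 0" by simp
      have nn: "norm ((s - t) *\<^sub>R v) = \<bar>s - t\<bar> * norm v" by simp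
      have "norm (x s - x t) / \<bar>s - t\<bar> - norm v = (norm (x s - x t) - norm ((s - t) *\<^sub>R v)) / \<bar>s - t\<bar>"
        unfolding nn using st by (simp add: field_simps)
      moreover have "\<bar>norm (x s - x t) - norm ((s - t) *\<^sub>R v)\<bar> \<le> norm ((x s - x t) - (s - t) *\<^sub>R v)"
        by (rule norm_triangle_ineq3)
      ultimately show "norm (norm (x s - x t) / \<bar>s - t\<bar> - norm v) \<le> norm ((x s - x t) - (s - t) *\<^sub>R v) / \<bar>s - t\<bar>"
        using st by (simp add: divide_right_mono)
    qed
  qed
  then show ?thesis by (simp add: LIM_zero_iff)
qed



lemma negligible_countable_set:
  fixes A :: "real set"
  assumes "countable A" shows "negligible A"
proof -
  have "A = \<Union>((\<lambda>x. {x}) ` A)" by auto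
  moreover have "negligible (\<Union>((\<lambda>x. {x}) ` A))"
    by (rule negligible_countable_Union) (use assms in auto)
  ultimately show ?thesis by simp
qed

lemma mono_image_Icc:
  fixes g :: "real \<Rightarrow> real"
  assumes inc: "\<And>x y. x \<in> I \<Longrightarrow> y \<in> I \<Longrightarrow> x < y \<Longrightarrow> g x < g y"
    and cont: "continuous_on I g" and sub: "{l..u} \<subseteq> I" and lu: "l \<le> u"
  shows "g ` {l..u} = {g l..g u}"
proof
  show "g ` {l..u} \<subseteq> {g l..g u}"
  proof
    fix y assume "y \<in> g ` {l..u}"
    then obtain z where z: "z \<in> {l..u}" "y = g z" by auto
    have m: "l \<in> I" "u \<in> I" "z \<in> I" using sub lu z by auto
    have "g l \<le> g z" using inc[OF m(1) m(3)] z by (cases "l = z") (auto intro: less_imp_le)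
    moreover have "g z \<le> g u" using inc[OF m(3) m(2)] z by (cases "z = u") (auto intro: less_imp_le)
    ultimately show "y \<in> {g l..g u}" using z by simp
  qed
  show "{g l..g u} \<subseteq> g ` {l..u}"
  proof
    fix y assume y: "y \<in> {g l..g u}"
    have "continuous_on {l..u} g" using cont sub continuous_on_subset by blast
    then obtain z where "z \<ge> l" "z \<le> u" "g z = y" using IVT'[of g l y u] y lu by auto
    then show "y \<in> g ` {l..u}" by auto
  qed
qed

lemma img_measure_sum:
  fixes g :: "real \<Rightarrow> real"
  assumes inc: "\<And>x y. x \<in> I \<Longrightarrow> y \<in> I \<Longrightarrow> x < y \<Longrightarrow> g x < g y"
    and cont: "continuous_on I g"
    and C: "countable C" "\<And>i. i \<in> C \<Longrightarrow> cball (fst i) (snd i) \<subseteq> I" "\<And>i. i \<in> C \<Longrightarrow> 0 < snd i"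
    and disj: "pairwise (\<lambda>i j. disjnt (cball (fst i) (snd i)) (cball (fst j) (snd j))) C"
  shows "emeasure lebesgue (g ` (\<Union>i\<in>C. cball (fst i) (snd i))) =
           (\<integral>\<^sup>+i. ennreal (g (fst i + snd i) - g (fst i - snd i)) \<partial>count_space C)"
    and "emeasure lebesgue (\<Union>i\<in>C. cball (fst i) (snd i)) = (\<integral>\<^sup>+i. ennreal (2 * snd i) \<partial>count_space C)"
    and "g ` (\<Union>i\<in>C. cball (fst i) (snd i)) \<in> sets lebesgue"
    and "(\<Union>i\<in>C. cball (fst i) (snd i)) \<in> sets lebesgue"
proof -
  have df: "disjoint_family_on (\<lambda>i. cball (fst i) (snd i)) C"
    using disj unfolding disjoint_family_on_def pairwise_def disjnt_def by blast
  have img: "g ` cball (fst i) (snd i) = {g (fst i - snd i)..g (fst i + snd i)}" if "i \<in> C" for i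
    unfolding cball_eq_atLeastAtMost
    by (rule mono_image_Icc[OF inc cont]) (use C(2)[OF that] C(3)[OF that] in \<open>auto simp: cball_eq_atLeastAtMost\<close>)
  have le: "g (fst i - snd i) \<le> g (fst i + snd i)" if "i \<in> C" for i
  proof -
    have "fst i - snd i \<in> I" "fst i + snd i \<in> I" using C(2)[OF that] C(3)[OF that]
      by (auto simp: cball_eq_atLeastAtMost subset_iff)
    then show ?thesis using inc[of "fst i - snd i" "fst i + snd i"] C(3)[OF that] by simp
  qed
  have dfg: "disjoint_family_on (\<lambda>i. g ` cball (fst i) (snd i)) C"
    unfolding disjoint_family_on_def
  proof (intro ballI impI)
    fix i j assume ij: "i \<in> C" "j \<in> C" "i \<noteq> j"
    show "g ` cball (fst i) (snd i) \<inter> g ` cball (fst j) (snd j) = {}"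
    proof (rule ccontr)
      assume "\<not> ?thesis"
      then obtain u v where uv: "u \<in> cball (fst i) (snd i)" "v \<in> cball (fst j) (snd j)" "g u = g v" by auto
      have "u \<noteq> v"
      proof
        assume "u = v"
        then have "u \<in> cball (fst i) (snd i) \<inter> cball (fst j) (snd j)" using uv by simp
        then show False using df ij unfolding disjoint_family_on_def by blast
      qed
      moreover have "u \<in> I" "v \<in> I" using uv(1,2) C(2)[OF ij(1)] C(2)[OF ij(2)] by (auto simp del: mem_cball)
      ultimately show False using inc[of u v] inc[of v u] uv(3) by (cases "u < v") auto
    qed
  qed
  have "g ` (\<Union>i\<in>C. cball (fst i) (snd i)) = (\<Union>i\<in>C. g ` cball (fst i) (snd i))" by auto
  also have "emeasure lebesgue \<dots> = (\<integral>\<^sup>+i. emeasure lebesgue (g ` cball (fst i) (snd i)) \<partial>count_space C)"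
    by (rule emeasure_UN_countable) (use C(1) dfg img in auto)
  also have "\<dots> = (\<integral>\<^sup>+i. ennreal (g (fst i + snd i) - g (fst i - snd i)) \<partial>count_space C)"
    by (rule nn_integral_cong) (use img le in auto)
  finally show "emeasure lebesgue (g ` (\<Union>i\<in>C. cball (fst i) (snd i))) =
           (\<integral>\<^sup>+i. ennreal (g (fst i + snd i) - g (fst i - snd i)) \<partial>count_space C)" .
  have "emeasure lebesgue (\<Union>i\<in>C. cball (fst i) (snd i)) = (\<integral>\<^sup>+i. emeasure lebesgue (cball (fst i) (snd i)) \<partial>count_space C)"
    by (rule emeasure_UN_countable) (use C(1) df in auto)
  also have "\<dots> = (\<integral>\<^sup>+i. ennreal (2 * snd i) \<partial>count_space C)"
  proof (rule nn_integral_cong)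
    fix i assume "i \<in> space (count_space C)"
    then have "snd i > 0" using C(3) by simp
    then show "emeasure lebesgue (cball (fst i) (snd i)) = ennreal (2 * snd i)"
      by (simp add: cball_eq_atLeastAtMost)
  qed
  finally show "emeasure lebesgue (\<Union>i\<in>C. cball (fst i) (snd i)) = (\<integral>\<^sup>+i. ennreal (2 * snd i) \<partial>count_space C)" .
  have "(\<Union>i\<in>C. g ` cball (fst i) (snd i)) \<in> sets lebesgue"
    by (rule sets.countable_UN'') (use C(1) img in auto)
  then show "g ` (\<Union>i\<in>C. cball (fst i) (snd i)) \<in> sets lebesgue" by (simp add: image_UN)
  show "(\<Union>i\<in>C. cball (fst i) (snd i)) \<in> sets lebesgue"
    by (rule sets.countable_UN'') (use C(1) in auto)
qed



lemma vitali_step: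
  fixes g :: "real \<Rightarrow> real" and a b r s :: real
  assumes inc: "\<And>x y. x \<in> {a<..<b} \<Longrightarrow> y \<in> {a<..<b} \<Longrightarrow> x < y \<Longrightarrow> g x < g y"
    and cont: "continuous_on {a<..<b} g" and r: "0 < r" and rs: "r < s"
    and E: "E = {t \<in> {a<..<b}. (\<forall>d>0. \<exists>y. t - d < y \<and> y < t \<and> g t - g y < r * (t - y)) \<and>
                    (\<forall>d>0. \<exists>y. t < y \<and> y < t + d \<and> s * (y - t) < g y - g t)}"
    and U: "open U" "E \<subseteq> U" "U \<subseteq> {a<..<b}"
  shows "\<exists>W. E \<subseteq> W \<and> W \<in> lmeasurable \<and> measure lebesgue W \<le> (r/s) * measure lebesgue U"
proof -
  define I where "I = {a<..<b}"
  have s: "s > 0" using r rs by simp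
  have Ulm: "U \<in> lmeasurable"
    using U(1,3) by (intro lmeasurable_open) (auto intro: bounded_subset[of "{a<..<b}"])
  define K1 where "K1 = {(c,\<rho>). 0 < \<rho> \<and> cball c \<rho> \<subseteq> U \<and> g (c+\<rho>) - g (c-\<rho>) < r * (2*\<rho>)}"
  have K1D: "0 < snd i \<and> cball (fst i) (snd i) \<subseteq> U \<and> g (fst i + snd i) - g (fst i - snd i) < r * (2 * snd i)"
    if "i \<in> K1" for i using that unfolding K1_def by (cases i) simp
  have pos1: "\<And>i. i \<in> K1 \<Longrightarrow> 0 < snd i" using K1D by blast
  have cov1: "\<exists>i. i \<in> K1 \<and> x \<in> cball (fst i) (snd i) \<and> snd i < d" if x: "x \<in> E" and d: "0 < d" for x d
  proof -
    obtain e where e: "e > 0" "ball x e \<subseteq> U" using U(1) U(2) x open_contains_ball by blast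
    have "\<exists>y. x - min e d < y \<and> y < x \<and> g x - g y < r * (x - y)" using x e d unfolding E by auto
    then obtain y where y: "x - min e d < y" "y < x" "g x - g y < r * (x - y)" by blast
    define c where "c = (x+y)/2"
    define \<rho> where "\<rho> = (x - y)/2"
    have cp: "c + \<rho> = x" "c - \<rho> = y" unfolding c_def \<rho>_def by (simp_all add: field_simps)
    have cb: "cball c \<rho> = {y..x}" unfolding cball_eq_atLeastAtMost cp ..
    have "cball c \<rho> \<subseteq> U" unfolding cb using e y by (auto simp: subset_iff dist_real_def)
    moreover have "0 < \<rho>" "\<rho> < d" using y unfolding \<rho>_def by auto
    moreover have "g (c+\<rho>) - g (c-\<rho>) < r * (2*\<rho>)"
    proof -
      have "2*\<rho> = x - y" unfolding \<rho>_def by simp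
      then show ?thesis unfolding cp using y by simp
    qed
    ultimately show ?thesis unfolding K1_def using cb y by (intro exI[of _ "(c,\<rho>)"]) auto
  qed
  obtain C1 where C1: "countable C1" "C1 \<subseteq> K1"
      "pairwise (\<lambda>i j. disjnt (cball (fst i) (snd i)) (cball (fst j) (snd j))) C1"
      "negligible (E - (\<Union>i\<in>C1. cball (fst i) (snd i)))"
    by (rule Vitali_covering_theorem_cballs[OF pos1 cov1])
  define V where "V = (\<Union>i\<in>C1. ball (fst i) (snd i))"
  have Vo: "open V" unfolding V_def by auto
  define M1 where "M1 = (\<Union>i\<in>C1. cball (fst i) (snd i))"
  have VM1: "V \<subseteq> M1" unfolding V_def M1_def by auto
  have M1U: "M1 \<subseteq> U"
  proof
    fix z assume "z \<in> M1"
    then obtain i where i: "i \<in> C1" "z \<in> cball (fst i) (snd i)" unfolding M1_def by blast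
    then have "cball (fst i) (snd i) \<subseteq> U" using C1(2) K1D by blast
    then show "z \<in> U" using i by blast
  qed
  define K2 where "K2 = {(c,\<rho>). 0 < \<rho> \<and> cball c \<rho> \<subseteq> V \<and> s * (2*\<rho>) < g (c+\<rho>) - g (c-\<rho>)}"
  have K2D: "0 < snd i \<and> cball (fst i) (snd i) \<subseteq> V \<and> s * (2 * snd i) < g (fst i + snd i) - g (fst i - snd i)"
    if "i \<in> K2" for i using that unfolding K2_def by (cases i) simp
  have pos2: "\<And>i. i \<in> K2 \<Longrightarrow> 0 < snd i" using K2D by blast
  have cov2: "\<exists>i. i \<in> K2 \<and> x \<in> cball (fst i) (snd i) \<and> snd i < d" if x: "x \<in> E \<inter> V" and d: "0 < d" for x d
  proof -
    obtain e where e: "e > 0" "ball x e \<subseteq> V" using Vo x open_contains_ball by blast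
    have "\<exists>y. x < y \<and> y < x + min e d \<and> s * (y - x) < g y - g x" using x e d unfolding E by auto
    then obtain y where y: "x < y" "y < x + min e d" "s * (y - x) < g y - g x" by blast
    define c where "c = (x+y)/2"
    define \<rho> where "\<rho> = (y - x)/2"
    have cp: "c + \<rho> = y" "c - \<rho> = x" unfolding c_def \<rho>_def by (simp_all add: field_simps)
    have cb: "cball c \<rho> = {x..y}" unfolding cball_eq_atLeastAtMost cp ..
    have "cball c \<rho> \<subseteq> V" unfolding cb using e y by (auto simp: subset_iff dist_real_def)
    moreover have "0 < \<rho>" "\<rho> < d" using y unfolding \<rho>_def by auto
    moreover have "s * (2*\<rho>) < g (c+\<rho>) - g (c-\<rho>)"
    proof -
      have "2*\<rho> = y - x" unfolding \<rho>_def by simp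
      then show ?thesis unfolding cp using y by simp
    qed
    ultimately show ?thesis unfolding K2_def using cb y by (intro exI[of _ "(c,\<rho>)"]) auto
  qed
  obtain C2 where C2: "countable C2" "C2 \<subseteq> K2"
      "pairwise (\<lambda>i j. disjnt (cball (fst i) (snd i)) (cball (fst j) (snd j))) C2"
      "negligible (E \<inter> V - (\<Union>i\<in>C2. cball (fst i) (snd i)))"
    by (rule Vitali_covering_theorem_cballs[OF pos2 cov2])
  define M2 where "M2 = (\<Union>i\<in>C2. cball (fst i) (snd i))"
  have M2V: "M2 \<subseteq> V"
  proof
    fix z assume "z \<in> M2"
    then obtain i where i: "i \<in> C2" "z \<in> cball (fst i) (snd i)" unfolding M2_def by blast
    then have "cball (fst i) (snd i) \<subseteq> V" using C2(2) K2D by blast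
    then show "z \<in> V" using i by blast
  qed
  have sub1: "cball (fst i) (snd i) \<subseteq> I" if "i \<in> C1" for i using C1(2) that U(3) K1D unfolding I_def by blast
  have sub2: "cball (fst i) (snd i) \<subseteq> I" if "i \<in> C2" for i
    using C2(2) that VM1 K2D M1U U(3) unfolding I_def by blast
  have inc': "\<And>x y. x \<in> I \<Longrightarrow> y \<in> I \<Longrightarrow> x < y \<Longrightarrow> g x < g y" using inc unfolding I_def .
  have cont': "continuous_on I g" using cont unfolding I_def .
  have pos1': "\<And>i. i \<in> C1 \<Longrightarrow> 0 < snd i" using pos1 C1(2) by blast
  have pos2': "\<And>i. i \<in> C2 \<Longrightarrow> 0 < snd i" using pos2 C2(2) by blast
  note S1 = img_measure_sum[OF inc' cont' C1(1) sub1 pos1' C1(3), unfolded M1_def[symmetric]]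
  note S2 = img_measure_sum[OF inc' cont' C2(1) sub2 pos2' C2(3), unfolded M2_def[symmetric]]
  have i1: "emeasure lebesgue (g ` M1) \<le> ennreal r * emeasure lebesgue M1"
  proof -
    have "emeasure lebesgue (g ` M1) = (\<integral>\<^sup>+i. ennreal (g (fst i + snd i) - g (fst i - snd i)) \<partial>count_space C1)"
      by (rule S1(1))
    also have "\<dots> \<le> (\<integral>\<^sup>+i. ennreal r * ennreal (2 * snd i) \<partial>count_space C1)"
    proof (rule nn_integral_mono)
      fix i assume "i \<in> space (count_space C1)"
      then have "i \<in> K1" "0 < snd i" using C1(2) pos1' by auto
      then have "g (fst i + snd i) - g (fst i - snd i) \<le> r * (2 * snd i)" using K1D by (meson less_imp_le)
      then show "ennreal (g (fst i + snd i) - g (fst i - snd i)) \<le> ennreal r * ennreal (2 * snd i)"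
        using r \<open>0 < snd i\<close> by (simp add: ennreal_mult[symmetric] ennreal_leI)
    qed
    also have "\<dots> = ennreal r * (\<integral>\<^sup>+i. ennreal (2 * snd i) \<partial>count_space C1)"
      by (rule nn_integral_cmult) simp
    also have "\<dots> = ennreal r * emeasure lebesgue M1" using S1(2) by simp
    finally show ?thesis .
  qed
  have i2: "ennreal s * emeasure lebesgue M2 \<le> emeasure lebesgue (g ` M2)"
  proof -
    have "ennreal s * emeasure lebesgue M2 = ennreal s * (\<integral>\<^sup>+i. ennreal (2 * snd i) \<partial>count_space C2)"
      using S2(2) by simp
    also have "\<dots> = (\<integral>\<^sup>+i. ennreal s * ennreal (2 * snd i) \<partial>count_space C2)"
      by (rule nn_integral_cmult[symmetric]) simp
    also have "\<dots> \<le> (\<integral>\<^sup>+i. ennreal (g (fst i + snd i) - g (fst i - snd i)) \<partial>count_space C2)"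
    proof (rule nn_integral_mono)
      fix i assume "i \<in> space (count_space C2)"
      then have "i \<in> K2" "0 < snd i" using C2(2) pos2' by auto
      then have "s * (2 * snd i) \<le> g (fst i + snd i) - g (fst i - snd i)" using K2D by (meson less_imp_le)
      then show "ennreal s * ennreal (2 * snd i) \<le> ennreal (g (fst i + snd i) - g (fst i - snd i))"
        using s \<open>0 < snd i\<close> by (simp add: ennreal_mult[symmetric] ennreal_leI)
    qed
    also have "\<dots> = emeasure lebesgue (g ` M2)" by (rule S2(1)[symmetric])
    finally show ?thesis .
  qed
  have i3: "emeasure lebesgue (g ` M2) \<le> emeasure lebesgue (g ` M1)"
    by (rule emeasure_mono) (use M2V VM1 S1(3) in auto)
  have i4: "emeasure lebesgue M1 \<le> emeasure lebesgue U"
    by (rule emeasure_mono) (use M1U Ulm in auto)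
  have "ennreal s * emeasure lebesgue M2 \<le> ennreal r * emeasure lebesgue U"
  proof -
    have "ennreal s * emeasure lebesgue M2 \<le> ennreal r * emeasure lebesgue M1" using i1 i2 i3 by order
    also have "\<dots> \<le> ennreal r * emeasure lebesgue U" using i4 by (rule mult_left_mono) simp
    finally show ?thesis .
  qed
  moreover have M2lm: "M2 \<in> lmeasurable"
  proof (rule bounded_set_imp_lmeasurable)
    have "M2 \<subseteq> {a<..<b}" using M2V VM1 M1U U(3) by blast
    then show "bounded M2" using bounded_subset[of "{a<..<b}" M2] by simp
    show "M2 \<in> sets lebesgue" by (rule S2(4))
  qed
  ultimately have "ennreal s * ennreal (measure lebesgue M2) \<le> ennreal r * ennreal (measure lebesgue U)"
    using Ulm by (simp add: emeasure_eq_measure2)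
  then have "ennreal (s * measure lebesgue M2) \<le> ennreal (r * measure lebesgue U)"
    using r s by (simp add: ennreal_mult)
  then have "s * measure lebesgue M2 \<le> r * measure lebesgue U"
    using r by (subst (asm) ennreal_le_iff) auto
  then have m2: "measure lebesgue M2 \<le> (r/s) * measure lebesgue U" using s by (simp add: field_simps)
  define N where "N = (E - M1) \<union> (M1 - V) \<union> (E \<inter> V - M2)"
  have nN: "negligible N"
  proof -
    have "M1 - V \<subseteq> (\<Union>i\<in>C1. {fst i - snd i, fst i + snd i})"
    proof
      fix z assume z: "z \<in> M1 - V"
      then obtain i where i: "i \<in> C1" "z \<in> cball (fst i) (snd i)" "z \<notin> ball (fst i) (snd i)"
        unfolding M1_def V_def by auto
      then have "dist (fst i) z = snd i" by simp
      then have "z = fst i - snd i \<or> z = fst i + snd i" by (auto simp: dist_real_def abs_if split: if_splits)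
      then show "z \<in> (\<Union>i\<in>C1. {fst i - snd i, fst i + snd i})" using i by auto
    qed
    moreover have "negligible (\<Union>i\<in>C1. {fst i - snd i, fst i + snd i})"
      by (rule negligible_countable_set) (use C1(1) in auto)
    ultimately have "negligible (M1 - V)" using negligible_subset by blast
    then show ?thesis unfolding N_def using C1(4) C2(4) unfolding M1_def M2_def by auto
  qed
  define W where "W = M2 \<union> N"
  have EW: "E \<subseteq> W" unfolding W_def N_def by auto
  have Nlm: "N \<in> lmeasurable" using nN negligible_imp_measurable by blast
  have Wlm: "W \<in> lmeasurable" unfolding W_def using M2lm Nlm by (rule fmeasurable.Un)
  have "measure lebesgue W \<le> measure lebesgue M2 + measure lebesgue N"
    unfolding W_def by (rule measure_Un_le) (use M2lm Nlm in auto)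
  also have "measure lebesgue N = 0" using nN negligible_imp_measure0 by blast
  finally have "measure lebesgue W \<le> (r/s) * measure lebesgue U" using m2 by simp
  then show ?thesis using EW Wlm by blast
qed



lemma vitali_core:
  fixes g :: "real \<Rightarrow> real" and a b r s :: real
  assumes inc: "\<And>x y. x \<in> {a<..<b} \<Longrightarrow> y \<in> {a<..<b} \<Longrightarrow> x < y \<Longrightarrow> g x < g y"
    and cont: "continuous_on {a<..<b} g" and rs: "r < s"
  shows "negligible {t \<in> {a<..<b}. (\<forall>d>0. \<exists>y. t - d < y \<and> y < t \<and> g t - g y < r * (t - y)) \<and>
                    (\<forall>d>0. \<exists>y. t < y \<and> y < t + d \<and> s * (y - t) < g y - g t)}"
    (is "negligible ?E")
proof (cases "r > 0")
  case False
  have "?E = {}"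
  proof (rule ccontr)
    assume "?E \<noteq> {}"
    then obtain t where t: "t \<in> {a<..<b}" "\<forall>d>0. \<exists>y. t - d < y \<and> y < t \<and> g t - g y < r * (t - y)" by blast
    obtain y where y: "t - (t - a) < y" "y < t" "g t - g y < r * (t - y)" using t(2)[rule_format, of "t - a"] t(1) by auto
    have "g y < g t" using inc[of y t] y t(1) by auto
    moreover have "r * (t - y) \<le> 0" using False y by (simp add: mult_nonpos_nonneg)
    ultimately show False using y by linarith
  qed
  then show ?thesis by (simp only: negligible_empty)
next
  case r: True
  define E where "E = ?E"
  have s: "s > 0" using r rs by simp
  have EI: "E \<subseteq> {a<..<b}" unfolding E_def by auto
  have step: "\<exists>W. E \<subseteq> W \<and> W \<in> lmeasurable \<and> measure lebesgue W \<le> (r/s) * measure lebesgue U"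
    if "open U" "E \<subseteq> U" "U \<subseteq> {a<..<b}" for U
    by (rule vitali_step[OF inc cont r rs E_def that])
  define Ms where "Ms = {measure lebesgue T | T. E \<subseteq> T \<and> T \<in> lmeasurable}"
  define M where "M = Inf Ms"
  have Msne: "Ms \<noteq> {}" unfolding Ms_def using EI by auto
  have Msb: "bdd_below Ms" unfolding Ms_def bdd_below_def by (intro exI[of _ 0]) auto
  have M0: "0 \<le> M" unfolding M_def using Msne by (intro cInf_greatest) (auto simp: Ms_def)
  have Mle: "M \<le> (r/s) * (M + 2*e)" if e: "e > 0" for e
  proof -
    obtain m where m: "m \<in> Ms" "m < M + e" using cInf_lessD[OF Msne, of "M + e"] e unfolding M_def by auto
    then obtain T where T: "E \<subseteq> T" "T \<in> lmeasurable" "measure lebesgue T < M + e" unfolding Ms_def by auto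
    obtain Op where O: "open Op" "T \<subseteq> Op" "Op - T \<in> lmeasurable" "emeasure lebesgue (Op - T) < ennreal e"
      using sets_lebesgue_outer_open[of T e] T(2) e by blast
    define U where "U = Op \<inter> {a<..<b}"
    have U: "open U" "E \<subseteq> U" "U \<subseteq> {a<..<b}" unfolding U_def using O T EI by auto
    have OTm: "measure lebesgue (Op - T) < e"
      using O(3,4) e by (simp add: emeasure_eq_measure2 ennreal_less_iff)
    have "measure lebesgue U \<le> measure lebesgue (T \<union> (Op - T))"
    proof (rule measure_mono_fmeasurable)
      show "U \<subseteq> T \<union> (Op - T)" using O(2) unfolding U_def by auto
      show "U \<in> sets lebesgue" using U(1) by auto
      show "T \<union> (Op - T) \<in> fmeasurable lebesgue" using T(2) O(3) by (rule fmeasurable.Un)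
    qed
    also have "\<dots> \<le> measure lebesgue T + measure lebesgue (Op - T)"
      by (rule measure_Un_le) (use O T in auto)
    finally have mU: "measure lebesgue U < M + 2*e" using T(3) OTm by linarith
    obtain W where W: "E \<subseteq> W" "W \<in> lmeasurable" "measure lebesgue W \<le> (r/s) * measure lebesgue U"
      using step[OF U] by blast
    have "M \<le> measure lebesgue W" unfolding M_def using W Msb by (intro cInf_lower) (auto simp: Ms_def)
    also have "\<dots> \<le> (r/s) * measure lebesgue U" by (rule W(3))
    also have "\<dots> \<le> (r/s) * (M + 2*e)" using mU r s by (intro mult_left_mono) auto
    finally show ?thesis .
  qed
  have "M = 0"
  proof -
    have q: "r/s < 1" "0 < r/s" using r rs s by auto
    have "(1 - r/s) * M \<le> 0"
    proof (rule field_le_epsilon)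
      fix e :: real assume e: "e > 0"
      have "M \<le> (r/s) * (M + 2*(e/2))" using Mle[of "e/2"] e by simp
      then have "M \<le> (r/s) * M + (r/s) * e" by (simp add: distrib_left)
      also have "\<dots> \<le> (r/s) * M + e"
      proof -
        have "(r/s) * e \<le> 1 * e" using q e by (intro mult_right_mono) auto
        then show ?thesis by simp
      qed
      finally show "(1 - r/s) * M \<le> 0 + e" by (simp add: algebra_simps)
    qed
    then have "M \<le> 0" using q by (simp add: mult_le_0_iff)
    then show ?thesis using M0 by simp
  qed
  have "negligible E"
    unfolding negligible_outer
  proof (intro allI impI)
    fix e :: real assume e: "e > 0"
    obtain m where m: "m \<in> Ms" "m < e" using cInf_lessD[OF Msne, of e] e \<open>M = 0\<close> unfolding M_def by auto
    then show "\<exists>T. E \<subseteq> T \<and> T \<in> lmeasurable \<and> measure lebesgue T < e" unfolding Ms_def by auto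
  qed
  then show ?thesis unfolding E_def .
qed



lemma freq_left_D:
  fixes t :: real
  assumes "frequently P (at_left t)" "e > 0"
  shows "\<exists>y. t - e < y \<and> y < t \<and> P y"
proof (rule ccontr)
  assume "\<not> ?thesis"
  then have "eventually (\<lambda>y. \<not> P y) (at_left t)"
    unfolding eventually_at_left_field using assms(2) by (intro exI[of _ "t - e"]) auto
  then show False using assms(1) unfolding frequently_def by simp
qed

lemma freq_right_D:
  fixes t :: real
  assumes "frequently P (at_right t)" "e > 0"
  shows "\<exists>y. t < y \<and> y < t + e \<and> P y"
proof (rule ccontr)
  assume "\<not> ?thesis"
  then have "eventually (\<lambda>y. \<not> P y) (at_right t)"
    unfolding eventually_at_right_field using assms(2) by (intro exI[of _ "t + e"]) auto
  then show False using assms(1) unfolding frequently_def by simp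
qed

lemma frequently_at_split:
  fixes t :: real
  shows "frequently P (at t) \<longleftrightarrow> frequently P (at_left t) \<or> frequently P (at_right t)"
  by (simp add: frequently_def eventually_at_split)

lemma osc_conv:
  fixes q :: "real \<Rightarrow> real" and t B :: real
  assumes bnd: "eventually (\<lambda>y. \<bar>q y\<bar> \<le> B) (at t)"
    and H1: "\<And>r s. r \<in> \<rat> \<Longrightarrow> s \<in> \<rat> \<Longrightarrow> r < s \<Longrightarrow>
               \<not> (frequently (\<lambda>y. q y < r) (at_left t) \<and> frequently (\<lambda>y. s < q y) (at_right t))"
    and H2: "\<And>r s. r \<in> \<rat> \<Longrightarrow> s \<in> \<rat> \<Longrightarrow> r < s \<Longrightarrow>
               \<not> (frequently (\<lambda>y. q y < r) (at_right t) \<and> frequently (\<lambda>y. s < q y) (at_left t))"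
  shows "\<exists>D. (q \<longlongrightarrow> D) (at t)"
proof -
  define U where "U = {c. eventually (\<lambda>y. q y < c) (at t)}"
  have Une: "B + 1 \<in> U" unfolding U_def mem_Collect_eq using bnd by (rule eventually_mono) auto
  then have Une': "U \<noteq> {}" by auto
  have Ubd: "bdd_below U" unfolding bdd_below_def
  proof (intro exI[of _ "-B"] ballI)
    fix c assume "c \<in> U"
    then have "eventually (\<lambda>y. q y < c) (at t)" unfolding U_def by simp
    then have "eventually (\<lambda>y. q y < c \<and> \<bar>q y\<bar> \<le> B) (at t)" using bnd
      by (rule eventually_conj)
    then have "\<exists>y. q y < c \<and> \<bar>q y\<bar> \<le> B" by (rule eventually_happens'[rotated]) simp
    then obtain y where "q y < c" "\<bar>q y\<bar> \<le> B" by blast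
    then show "-B \<le> c" by linarith
  qed
  define D where "D = Inf U"
  have "(q \<longlongrightarrow> D) (at t)"
  proof (rule order_tendstoI)
    fix c assume "D < c"
    then obtain u where "u \<in> U" "u < c" using cInf_lessD[OF Une'] unfolding D_def by blast
    then show "eventually (\<lambda>y. q y < c) (at t)" unfolding U_def by (auto elim: eventually_mono)
  next
    fix c assume cD: "c < D"
    show "eventually (\<lambda>y. c < q y) (at t)"
    proof (rule ccontr)
      assume "\<not> ?thesis"
      then have fc: "frequently (\<lambda>y. q y \<le> c) (at t)" unfolding frequently_def by (simp add: not_le)
      obtain r where r: "r \<in> \<rat>" "c < r" "r < D" using Rats_dense_in_real[OF cD] by blast
      obtain s where s: "s \<in> \<rat>" "r < s" "s < D" using Rats_dense_in_real[OF r(3)] by blast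
      obtain s' where s': "s < s'" "s' < D" using dense[OF s(3)] by blast
      have fr: "frequently (\<lambda>y. q y < r) (at t)" using fc by (rule frequently_elim1) (use r in auto)
      have fs: "frequently (\<lambda>y. s < q y) (at t)"
      proof (rule ccontr)
        assume "\<not> ?thesis"
        then have "eventually (\<lambda>y. q y \<le> s) (at t)" unfolding frequently_def by (simp add: not_less)
        then have "eventually (\<lambda>y. q y < s') (at t)" by (rule eventually_mono) (use s' in auto)
        then have "s' \<in> U" unfolding U_def by simp
        then have "D \<le> s'" unfolding D_def using Ubd by (rule cInf_lower)
        then show False using s' by simp
      qed
      show False
      proof (cases "frequently (\<lambda>y. q y < r) (at_left t)")
        case rl: True
        show False
        proof (cases "frequently (\<lambda>y. s < q y) (at_right t)")
          case True
          then show False using H1[OF r(1) s(1) s(2)] rl by blast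
        next
          case sr: False
          then have sl: "frequently (\<lambda>y. s < q y) (at_left t)" using fs by (simp add: frequently_at_split)
          obtain m where m: "m \<in> \<rat>" "r < m" "m < s" using Rats_dense_in_real[OF s(2)] by blast
          show False
          proof (cases "frequently (\<lambda>y. m < q y) (at_right t)")
            case True
            then show False using H1[OF r(1) m(1) m(2)] rl by blast
          next
            case False
            then have ev: "eventually (\<lambda>y. q y \<le> m) (at_right t)" unfolding frequently_def by (simp add: not_less)
            obtain m' where m': "m' \<in> \<rat>" "m < m'" "m' < s" using Rats_dense_in_real[OF m(3)] by blast
            have "eventually (\<lambda>y. q y < m') (at_right t)" using ev by (rule eventually_mono) (use m' in auto)
            then have "frequently (\<lambda>y. q y < m') (at_right t)" by (intro eventually_frequently) auto
            then show False using H2[OF m'(1) s(1) m'(3)] sl by blast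
          qed
        qed
      next
        case rl: False
        then have rr: "frequently (\<lambda>y. q y < r) (at_right t)" using fr by (simp add: frequently_at_split)
        show False
        proof (cases "frequently (\<lambda>y. s < q y) (at_left t)")
          case True
          then show False using H2[OF r(1) s(1) s(2)] rr by blast
        next
          case sl: False
          then have sr: "frequently (\<lambda>y. s < q y) (at_right t)" using fs by (simp add: frequently_at_split)
          obtain m where m: "m \<in> \<rat>" "r < m" "m < s" using Rats_dense_in_real[OF s(2)] by blast
          show False
          proof (cases "frequently (\<lambda>y. q y < m) (at_left t)")
            case True
            then show False using H1[OF m(1) s(1) m(3)] sr by blast
          next
            case False
            then have ev: "eventually (\<lambda>y. m \<le> q y) (at_left t)" unfolding frequently_def by (simp add: not_less)
            obtain m' where m': "m' \<in> \<rat>" "r < m'" "m' < m" using Rats_dense_in_real[OF m(2)] by blast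
            have "eventually (\<lambda>y. m' < q y) (at_left t)" using ev by (rule eventually_mono) (use m' in auto)
            then have "frequently (\<lambda>y. m' < q y) (at_left t)" by (intro eventually_frequently) auto
            then show False using H2[OF r(1) m'(1) m'(2)] rr by blast
          qed
        qed
      qed
    qed
  qed
  then show ?thesis by blast
qed



lemma lipschitz_ae_differentiable:
  fixes f :: "real \<Rightarrow> real"
  assumes lip: "L-lipschitz_on {a<..<b} f"
  shows "negligible {t \<in> {a<..<b}. \<not> f differentiable (at t)}"
proof -
  define I where "I = {a<..<b}"
  define K where "K = \<bar>L\<bar> + 1"
  define g where "g x = f x + K * x" for x
  have fl: "\<bar>f x - f y\<bar> \<le> \<bar>L\<bar> * \<bar>x - y\<bar>" if "x \<in> I" "y \<in> I" for x y
  proof -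
    have "dist (f x) (f y) \<le> L * dist x y" using lipschitz_onD[OF lip] that unfolding I_def by blast
    also have "\<dots> \<le> \<bar>L\<bar> * dist x y" by (intro mult_right_mono) auto
    finally show ?thesis by (simp add: dist_real_def)
  qed
  have inc: "g x < g y" if "x \<in> I" "y \<in> I" "x < y" for x y
  proof -
    have "f x - f y \<le> \<bar>L\<bar> * (y - x)" using fl[OF that(1,2)] that(3) by (simp add: abs_le_iff abs_minus_commute)
    then show ?thesis unfolding g_def K_def using that(3) by (simp add: algebra_simps)
  qed
  have contf: "continuous_on I f" using lipschitz_on_continuous_on[OF lip] unfolding I_def .
  have cont: "continuous_on I g" unfolding g_def by (intro continuous_intros contf)
  define N1 where "N1 h c d r s = {t \<in> {c<..<d}. (\<forall>e>0. \<exists>y. t - e < y \<and> y < t \<and> h t - h y < r * (t - y)) \<and>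
                    (\<forall>e>0. \<exists>y. t < y \<and> y < t + e \<and> s * (y - t) < h y - h t)}" for h :: "real \<Rightarrow> real" and c d r s :: real
  have nN1: "negligible (N1 g a b r s)" if "r < s" for r s
    unfolding N1_def by (rule vitali_core) (use inc cont that in \<open>auto simp: I_def\<close>)
  define gt where "gt u = - g (- u)" for u
  have inct: "gt x < gt y" if "x \<in> {-b<..<-a}" "y \<in> {-b<..<-a}" "x < y" for x y
    unfolding gt_def using inc[of "-y" "-x"] that unfolding I_def by auto
  have contt: "continuous_on {-b<..<-a} gt"
  proof -
    have "continuous_on {-b<..<-a} (\<lambda>u. - u)" by (intro continuous_intros)
    moreover have "(\<lambda>u. - u) ` {-b<..<-a} \<subseteq> I" unfolding I_def by auto
    ultimately have "continuous_on {-b<..<-a} (g \<circ> (\<lambda>u. - u))" using cont continuous_on_compose continuous_on_subset by blast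
    then show ?thesis unfolding gt_def o_def by (intro continuous_intros) 
  qed
  have nN1t: "negligible (N1 gt (-b) (-a) r s)" if "r < s" for r s
    unfolding N1_def by (rule vitali_core) (use inct contt that in auto)
  define N2 where "N2 r s = {t \<in> I. (\<forall>e>0. \<exists>y. t < y \<and> y < t + e \<and> g y - g t < r * (y - t)) \<and>
                    (\<forall>e>0. \<exists>y. t - e < y \<and> y < t \<and> s * (t - y) < g t - g y)}" for r s
  have N2sub: "N2 r s \<subseteq> (\<lambda>u. - u) ` N1 gt (-b) (-a) r s" for r s
  proof
    fix t assume t: "t \<in> N2 r s"
    have "-t \<in> N1 gt (-b) (-a) r s"
      unfolding N1_def
    proof (intro CollectI conjI allI impI)
      show "-t \<in> {-b<..<-a}" using t unfolding N2_def I_def by auto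
    next
      fix e :: real assume e: "e > 0"
      obtain y where y: "t < y" "y < t + e" "g y - g t < r * (y - t)" using t e unfolding N2_def by blast
      show "\<exists>y. - t - e < y \<and> y < - t \<and> gt (- t) - gt y < r * (- t - y)"
        by (rule exI[of _ "-y"]) (use y in \<open>simp add: gt_def algebra_simps\<close>)
    next
      fix e :: real assume e: "e > 0"
      obtain y where y: "t - e < y" "y < t" "s * (t - y) < g t - g y" using t e unfolding N2_def by blast
      show "\<exists>y. - t < y \<and> y < - t + e \<and> s * (y - - t) < gt y - gt (- t)"
        by (rule exI[of _ "-y"]) (use y in \<open>simp add: gt_def algebra_simps\<close>)
    qed
    then show "t \<in> (\<lambda>u. - u) ` N1 gt (-b) (-a) r s" by (rule rev_image_eqI) simp
  qed
  have nN2: "negligible (N2 r s)" if "r < s" for r s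
  proof -
    have "negligible ((\<lambda>u::real. - u) ` N1 gt (-b) (-a) r s)"
      by (rule negligible_differentiable_image_negligible) (use nN1t[OF that] in \<open>auto intro!: derivative_intros simp: differentiable_on_def\<close>)
    then show ?thesis using N2sub negligible_subset by blast
  qed
  define F where "F = (\<lambda>(r,s). if r < s then N1 g a b r s \<union> N2 r s else {}) ` (\<rat> \<times> \<rat>)"
  have cF: "countable F" unfolding F_def by (intro countable_image countable_SIGMA countable_rat)
  have nF: "negligible S" if "S \<in> F" for S
    using that nN1 nN2 unfolding F_def by auto
  have bad: "{t \<in> {a<..<b}. \<not> f differentiable (at t)} \<subseteq> \<Union>F"
  proof
    fix t assume "t \<in> {t \<in> {a<..<b}. \<not> f differentiable (at t)}"
    then have tI: "t \<in> I" and nd: "\<not> f differentiable (at t)" unfolding I_def by auto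
    define q where "q y = (g y - g t) / (y - t)" for y
    have ng: "\<not> (\<exists>D. (q \<longlongrightarrow> D) (at t))"
    proof
      assume "\<exists>D. (q \<longlongrightarrow> D) (at t)"
      then obtain D where "(q \<longlongrightarrow> D) (at t)" by blast
      then have "(g has_real_derivative D) (at t)" unfolding has_field_derivative_iff q_def .
      then have "((\<lambda>x. g x - K * x) has_real_derivative D - K) (at t)" by (intro derivative_eq_intros) auto
      then have "(f has_real_derivative D - K) (at t)" unfolding g_def by simp
      then show False using nd real_differentiable_def by blast
    qed
    have bnd: "eventually (\<lambda>y. \<bar>q y\<bar> \<le> \<bar>L\<bar> + K) (at t)"
    proof -
      have "eventually (\<lambda>y. y \<in> I) (at t)" using tI by (intro eventually_at_in_open') (auto simp: I_def)
      then show ?thesis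
      proof (rule eventually_mono)
        fix y assume yI: "y \<in> I"
        show "\<bar>q y\<bar> \<le> \<bar>L\<bar> + K"
        proof (cases "y = t")
          case True then show ?thesis by (simp add: q_def K_def)
        next
          case False
          have "\<bar>g y - g t\<bar> \<le> \<bar>f y - f t\<bar> + K * \<bar>y - t\<bar>"
          proof -
            have "g y - g t = (f y - f t) + K * (y - t)" by (simp add: g_def algebra_simps)
            then have "\<bar>g y - g t\<bar> \<le> \<bar>f y - f t\<bar> + \<bar>K * (y - t)\<bar>" using abs_triangle_ineq by metis
            moreover have "\<bar>K * (y - t)\<bar> = K * \<bar>y - t\<bar>" unfolding K_def by (simp add: abs_mult)
            ultimately show ?thesis by simp
          qed
          also have "\<dots> \<le> (\<bar>L\<bar> + K) * \<bar>y - t\<bar>" using fl[OF yI tI] by (simp add: algebra_simps)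
          finally show ?thesis unfolding q_def using False by (simp add: abs_divide divide_le_eq)
        qed
      qed
    qed
    obtain r s where rs: "r \<in> \<rat>" "s \<in> \<rat>" "r < s" and
      cases: "(frequently (\<lambda>y. q y < r) (at_left t) \<and> frequently (\<lambda>y. s < q y) (at_right t)) \<or>
              (frequently (\<lambda>y. q y < r) (at_right t) \<and> frequently (\<lambda>y. s < q y) (at_left t))"
      using osc_conv[OF bnd] ng by blast
    have "t \<in> N1 g a b r s \<or> t \<in> N2 r s"
    proof (rule disjE[OF cases])
      assume A: "frequently (\<lambda>y. q y < r) (at_left t) \<and> frequently (\<lambda>y. s < q y) (at_right t)"
      have "t \<in> N1 g a b r s" unfolding N1_def
      proof (intro CollectI conjI allI impI)
        show "t \<in> {a<..<b}" using tI unfolding I_def .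
      next
        fix e :: real assume "e > 0"
        then obtain y where y: "t - e < y" "y < t" "q y < r" using freq_left_D A by blast
        have "r * (y - t) < g y - g t" using y unfolding q_def by (simp add: neg_divide_less_eq)
        then have "g t - g y < r * (t - y)" by (simp add: algebra_simps)
        then show "\<exists>y. t - e < y \<and> y < t \<and> g t - g y < r * (t - y)" using y by blast
      next
        fix e :: real assume "e > 0"
        then obtain y where y: "t < y" "y < t + e" "s < q y" using freq_right_D A by blast
        then have "s * (y - t) < g y - g t" unfolding q_def by (simp add: pos_less_divide_eq)
        then show "\<exists>y. t < y \<and> y < t + e \<and> s * (y - t) < g y - g t" using y by blast
      qed
      then show ?thesis by simp
    next
      assume A: "frequently (\<lambda>y. q y < r) (at_right t) \<and> frequently (\<lambda>y. s < q y) (at_left t)"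
      have "t \<in> N2 r s" unfolding N2_def
      proof (intro CollectI conjI allI impI)
        show "t \<in> I" by (rule tI)
      next
        fix e :: real assume "e > 0"
        then obtain y where y: "t < y" "y < t + e" "q y < r" using freq_right_D A by blast
        then have "g y - g t < r * (y - t)" unfolding q_def by (simp add: pos_divide_less_eq)
        then show "\<exists>y. t < y \<and> y < t + e \<and> g y - g t < r * (y - t)" using y by blast
      next
        fix e :: real assume "e > 0"
        then obtain y where y: "t - e < y" "y < t" "s < q y" using freq_left_D A by blast
        have "g y - g t < s * (y - t)" using y unfolding q_def by (simp add: neg_less_divide_eq)
        then have "s * (t - y) < g t - g y" by (simp add: algebra_simps)
        then show "\<exists>y. t - e < y \<and> y < t \<and> s * (t - y) < g t - g y" using y by blast
      qed
      then show ?thesis by simp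
    qed
    moreover have "N1 g a b r s \<union> N2 r s \<in> F" unfolding F_def using rs by (auto intro!: image_eqI[of _ _ "(r,s)"])
    ultimately show "t \<in> \<Union>F" by blast
  qed
  moreover have "negligible (\<Union>F)" using cF nF by blast
  ultimately show ?thesis using negligible_subset by blast
qed



lemma locally_lipschitz_ae_diff:
  assumes "locally_lipschitz_on {0..t0} lam"
  shows "negligible {t \<in> {0<..<t0}. \<not> lam differentiable (at t)}"
proof -
  define F where "F = (\<lambda>(p,q). {s \<in> {p<..<q}. \<not> lam differentiable (at s) \<and> (\<exists>L. L-lipschitz_on {p<..<q} lam)}) ` (\<rat> \<times> \<rat>)"
  have cF: "countable F" unfolding F_def by (intro countable_image countable_SIGMA countable_rat)
  have nF: "negligible S" if "S \<in> F" for S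
  proof -
    obtain p q where S: "S = {s \<in> {p<..<q}. \<not> lam differentiable (at s) \<and> (\<exists>L. L-lipschitz_on {p<..<q} lam)}"
      using \<open>S \<in> F\<close> unfolding F_def by auto
    show ?thesis
    proof (cases "\<exists>L. L-lipschitz_on {p<..<q} lam")
      case True
      then obtain L where "L-lipschitz_on {p<..<q} lam" by blast
      from lipschitz_ae_differentiable[OF this] show ?thesis unfolding S
        by (rule negligible_subset) auto
    next
      case False
      then show ?thesis unfolding S by simp
    qed
  qed
  have "{t \<in> {0<..<t0}. \<not> lam differentiable (at t)} \<subseteq> \<Union>F"
  proof
    fix t assume t: "t \<in> {t \<in> {0<..<t0}. \<not> lam differentiable (at t)}"
    then have t0: "t \<in> {0..t0}" by auto
    obtain e L where e: "e > 0" and L: "L-lipschitz_on (cball t e \<inter> {0..t0}) lam"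
      using assms t0 unfolding locally_lipschitz_on_def by blast
    obtain p where p: "p \<in> \<rat>" "max 0 (t - e) < p" "p < t" using Rats_dense_in_real[of "max 0 (t - e)" t] t e by auto
    obtain q where q: "q \<in> \<rat>" "t < q" "q < min t0 (t + e)" using Rats_dense_in_real[of t "min t0 (t + e)"] t e by auto
    have sub: "{p<..<q} \<subseteq> cball t e \<inter> {0..t0}" using p q by (auto simp: dist_real_def)
    have "L-lipschitz_on {p<..<q} lam" by (rule lipschitz_on_subset[OF L sub])
    then have "t \<in> {s \<in> {p<..<q}. \<not> lam differentiable (at s) \<and> (\<exists>L. L-lipschitz_on {p<..<q} lam)}"
      using t p q by auto
    moreover have "{s \<in> {p<..<q}. \<not> lam differentiable (at s) \<and> (\<exists>L. L-lipschitz_on {p<..<q} lam)} \<in> F"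
      unfolding F_def using p q by auto
    ultimately show "t \<in> \<Union>F" by blast
  qed
  moreover have "negligible (\<Union>F)" using cF nF by blast
  ultimately show ?thesis using negligible_subset by blast
qed

theorem lemma2p4:
  fixes A :: "'a::{real_inner, complete_space} \<Rightarrow> 'a set"
    and \<theta> t0 :: real and p :: nat
    and x x' :: "real \<Rightarrow> 'a" and lam :: "real \<Rightarrow> real"
  assumes "maximal_monotone A"
    and "\<exists>z. 0 \<in> A z"
    and "\<theta> > 0" and "p \<ge> 1"
    and "\<And>t. t \<in> {0..t0} \<Longrightarrow> lam t > 0"
    and "\<And>t. t \<in> {0..t0} \<Longrightarrow> (x has_vector_derivative x' t) (at t within {0..t0})"
    and "continuous_on {0..t0} x'"
    and "locally_lipschitz_on {0..t0} lam"
    and "\<And>t. t \<in> {0..t0} \<Longrightarrow> x' t + x t - resolvent (lam t) A (x t) = 0"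
    and "\<And>t. t \<in> {0..t0} \<Longrightarrow>
           lam t * norm (resolvent (lam t) A (x t) - x t) ^ (p - 1) = \<theta>"
    and "0 \<notin> A (x 0)"
  shows "AE t in lborel. t \<in> {0..t0} \<longrightarrow>
           (\<exists>D. (lam has_real_derivative D) (at t within {0..t0}) \<and>
                \<bar>D\<bar> \<le> (real p - 1) * lam t)"
proof -
  note mm = assms(1)
  have ne: "\<exists>z. A z \<noteq> {}" using assms(2) by auto
  note th = assms(3)
  define k where "k = p - 1"
  have rk: "real p - 1 = real k" unfolding k_def using assms(4) by (simp add: of_nat_diff)
  define \<phi> where "\<phi> s = norm (x' s)" for s
  have xr: "x' s = resolvent (lam s) A (x s) - x s" if "s \<in> {0..t0}" for s
    using assms(9)[OF that] by (simp add: algebra_simps eq_neg_iff_add_eq_0)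
  have phi_r: "\<phi> s = norm (resolvent (lam s) A (x s) - x s)" if "s \<in> {0..t0}" for s
    unfolding \<phi>_def using xr[OF that] by simp
  have psi: "\<phi> s ^ k = \<theta> / lam s" if "s \<in> {0..t0}" for s
    using assms(10)[OF that] assms(5)[OF that] unfolding phi_r[OF that] k_def by (simp add: field_simps)
  have bound: "\<bar>\<phi> s ^ k - \<phi> t ^ k\<bar> \<le> real k * (max (\<phi> t) (\<phi> s))^(k-1) * norm (x s - x t)"
    if s: "s \<in> {0..t0}" and t: "t \<in> {0..t0}" for s t
  proof (cases "k = 0")
    case True
    then show ?thesis by simp
  next
    case False
    then have k1: "k \<ge> 1" by simp
    have "\<bar>\<phi> s - \<phi> t\<bar> \<le> norm (x s - x t)"
      unfolding phi_r[OF s] phi_r[OF t]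
      by (rule phi_lip[OF mm ne assms(5)[OF t] assms(5)[OF s] k1 th]) (use assms(10) s t k_def in auto)
    moreover have "\<bar>\<phi> s ^ k - \<phi> t ^ k\<bar> \<le> real k * (max (\<phi> t) (\<phi> s))^(k-1) * \<bar>\<phi> s - \<phi> t\<bar>"
      by (rule pow_diff_bound) (auto simp: \<phi>_def)
    moreover have "real k * (max (\<phi> t) (\<phi> s))^(k-1) * \<bar>\<phi> s - \<phi> t\<bar> \<le> real k * (max (\<phi> t) (\<phi> s))^(k-1) * norm (x s - x t)"
      using calculation(1) by (rule mult_left_mono) (auto simp: \<phi>_def max_def intro!: mult_nonneg_nonneg zero_le_power)
    ultimately show ?thesis by linarith
  qed
  have main: "\<bar>D\<bar> \<le> real k * lam t"
    if t: "t \<in> {0<..<t0}" and D: "(lam has_real_derivative D) (at t)" for t D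
  proof -
    have tI: "t \<in> {0..t0}" using t by auto
    have lt: "lam t > 0" using assms(5)[OF tI] .
    have at_eq: "at t within {0..t0} = at t" using t by (intro at_within_interior) simp
    have xd: "(x has_vector_derivative x' t) (at t)" using assms(6)[OF tI] unfolding at_eq .
    have cx: "isCont x' t" using continuous_on_interior[OF assms(7)] t by simp
    define E where "E = \<theta> * (- (D * inverse (lam t ^ Suc (Suc 0))))"
    have dpsi: "((\<lambda>s. \<theta> * inverse (lam s)) has_real_derivative E) (at t)"
      unfolding E_def by (intro DERIV_cmult DERIV_inverse_fun D) (use lt in simp)
    have Q: "((\<lambda>s. \<bar>\<theta> * inverse (lam s) - \<theta> * inverse (lam t)\<bar> / \<bar>s - t\<bar>) \<longlongrightarrow> \<bar>E\<bar>) (at t)"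
    proof -
      have "((\<lambda>s. (\<theta> * inverse (lam s) - \<theta> * inverse (lam t)) / (s - t)) \<longlongrightarrow> E) (at t)"
        using dpsi unfolding has_field_derivative_iff .
      from tendsto_rabs[OF this] show ?thesis by (simp add: abs_divide)
    qed
    have B: "((\<lambda>s. real k * (max (\<phi> t) (\<phi> s))^(k-1) * (norm (x s - x t) / \<bar>s - t\<bar>)) \<longlongrightarrow>
              real k * (max (\<phi> t) (\<phi> t))^(k-1) * \<phi> t) (at t)"
    proof -
      have "(\<phi> \<longlongrightarrow> \<phi> t) (at t)" unfolding \<phi>_def using cx by (intro tendsto_intros) (simp add: isCont_def)
      moreover have "((\<lambda>s. norm (x s - x t) / \<bar>s - t\<bar>) \<longlongrightarrow> \<phi> t) (at t)"
        unfolding \<phi>_def by (rule norm_ratio_tendsto[OF xd])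
      ultimately show ?thesis by (intro tendsto_intros)
    qed
    have ev: "\<forall>\<^sub>F s in at t. \<bar>\<theta> * inverse (lam s) - \<theta> * inverse (lam t)\<bar> / \<bar>s - t\<bar> \<le>
              real k * (max (\<phi> t) (\<phi> s))^(k-1) * (norm (x s - x t) / \<bar>s - t\<bar>)"
    proof -
      have "\<forall>\<^sub>F s in at t. s \<in> {0<..<t0}"
        using t by (intro eventually_at_in_open') auto
      then show ?thesis
      proof (rule eventually_mono)
        fix s assume s: "s \<in> {0<..<t0}"
        then have sI: "s \<in> {0..t0}" by auto
        have "\<bar>\<theta> * inverse (lam s) - \<theta> * inverse (lam t)\<bar> = \<bar>\<phi> s ^ k - \<phi> t ^ k\<bar>"
          using psi[OF sI] psi[OF tI] by (simp add: divide_inverse)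
        also have "\<dots> \<le> real k * (max (\<phi> t) (\<phi> s))^(k-1) * norm (x s - x t)" by (rule bound[OF sI tI])
        finally show "\<bar>\<theta> * inverse (lam s) - \<theta> * inverse (lam t)\<bar> / \<bar>s - t\<bar> \<le>
              real k * (max (\<phi> t) (\<phi> s))^(k-1) * (norm (x s - x t) / \<bar>s - t\<bar>)"
          by (simp add: divide_right_mono)
      qed
    qed
    have "\<bar>E\<bar> \<le> real k * (max (\<phi> t) (\<phi> t))^(k-1) * \<phi> t"
      by (rule tendsto_le[OF _ B Q ev]) simp
    also have "\<dots> = real k * \<phi> t ^ k" by (cases k) auto
    also have "\<dots> = real k * (\<theta> / lam t)" using psi[OF tI] by simp
    finally have "\<theta> * \<bar>D\<bar> / (lam t)^2 \<le> real k * (\<theta> / lam t)"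
      unfolding E_def using lt th by (simp add: abs_mult power2_eq_square divide_inverse)
    then have "\<theta> * \<bar>D\<bar> \<le> real k * (\<theta> / lam t) * (lam t)^2" using lt by (simp add: field_simps)
    then have "\<theta> * \<bar>D\<bar> \<le> \<theta> * (real k * lam t)" using lt by (simp add: power2_eq_square field_simps)
    then show ?thesis using th by simp
  qed
  define N where "N = {0, t0} \<union> {t \<in> {0<..<t0}. \<not> lam differentiable (at t)}"
  have nN: "negligible N" unfolding N_def
    using locally_lipschitz_ae_diff[OF assms(8)] by (simp add: negligible_insert)
  have pt: "t \<in> {0..t0} \<longrightarrow>
           (\<exists>D. (lam has_real_derivative D) (at t within {0..t0}) \<and> \<bar>D\<bar> \<le> (real p - 1) * lam t)"
    if "t \<notin> N" for t
  proof
    assume tI: "t \<in> {0..t0}"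
    then have t: "t \<in> {0<..<t0}" and dt: "lam differentiable (at t)" using that unfolding N_def by auto
    then have D: "(lam has_real_derivative deriv lam t) (at t)" using DERIV_deriv_iff_real_differentiable by blast
    have "\<bar>deriv lam t\<bar> \<le> (real p - 1) * lam t" using main[OF t D] rk by simp
    with D show "\<exists>D. (lam has_real_derivative D) (at t within {0..t0}) \<and> \<bar>D\<bar> \<le> (real p - 1) * lam t"
      using has_field_derivative_at_within by blast
  qed
  have "AE t in lebesgue. t \<notin> N" using nN negligible_iff_null_sets AE_not_in by blast
  then have "AE t in lebesgue. t \<in> {0..t0} \<longrightarrow>
           (\<exists>D. (lam has_real_derivative D) (at t within {0..t0}) \<and> \<bar>D\<bar> \<le> (real p - 1) * lam t)"
    by (rule eventually_mono) (rule pt)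
  then show ?thesis by (simp add: AE_completion_iff)
qed


end
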